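(* Let $0<a<b<1$ with $a+b=1$, $m\in C^1([0,1])$ non-constant, $c\in C([0,1])$, and assume (H1), (H2) and $m\in S_{\mathcal{N}}$. Then $\liminf_{s\to+\infty}\lambda(s)\ge\lambda^{\mathcal{N}}$.
   Context: Fix an integer $d\ge1$. $\lambda(s)$ denotes the principal eigenvalue of $-\varphi''-\frac{d-1}{r}\varphi'-2s\,m'(r)\varphi'+c(r)\varphi=\lambda\varphi$ on $(0,1)$, $\varphi'(0)=\varphi'(1)=0$; equivalently $\lambda(s)=\min\{\int_0^1 r^{d-1}e^{2sm}(|\varphi'|^2+c\varphi^2)dr:\ \varphi\in H^1((0,1)),\ \int_0^1 r^{d-1}e^{2sm}\varphi^2dr=1\}$. $\lambda^{\mathcal{D}}$ (resp. $\lambda^{\mathcal{N}}$) is the principal eigenvalue of $-\varphi''-\frac{d-1}{r}\varphi'+c\varphi=\lambda\varphi$ on $(a,b)$ with Dirichlet (resp. Neumann) boundary conditions, i.e. the minimum of $\int_a^b r^{d-1}(|\varphi'|^2+c\varphi^2)dr$ over $\varphi\in H^1_0((a,b))$ (resp. $H^1((a,b))$) with $\int_a^b r^{d-1}\varphi^2dr=1$. (H1): $m(r)=m(1-r)$ on $[0,1]$ and $m\equiv0$ on $[a,b]$, where $a+b=1$. (H2): $c>0$ on $[0,1]$ and $c(r)>\lambda^{\mathcal{D}}$ for $r\in[0,a]\cup[b,1]$. Step function $\bar m$: given $\delta\in(0,a)$, constants $0<h<\alpha<\beta<1<\nu$ and $l\in\mathbb{N}$ with $\sum_{i\ge1}(\alpha^{i+l}+\beta^{i+l})=a-\delta$,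 put $Y_0=\delta$, $Y_n=\delta+\sum_{i=1}^n(\alpha^{i+l}+\beta^{i+l})$ and $X_n=Y_n-\beta^{n+l}$ for $n\ge1$; define $\bar m(r)=h^n$ on $[Y_{n-1},X_n]$ and $\bar m(r)=-\nu h^n$ on $[X_n,Y_n]$ for $n\ge1$, and $\bar m(r)=\bar m(1-r)$ for $r\in[b,1-\delta]$. $S_{\mathcal{N}}$: the set of $m\in C^1([0,1])$ such that, for some such $\delta,h,\alpha,\beta,\nu,l$, $m'$ changes sign only finitely many times in $[0,\delta)\cup(1-\delta,1]$ and $m(r)\le\bar m(r)$ for all $r\in[\delta,a]\cup[b,1-\delta]$. *)

theory Defs
  imports "HOL-Analysis.Analysis"
begin

text \<open>phi belongs to H^1((p,q)) with weak derivative g: g is square integrable on [p,q]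
  and phi (its continuous representative) is the primitive of g.\<close>
definition H1_with_deriv :: "real \<Rightarrow> real \<Rightarrow> (real \<Rightarrow> real) \<Rightarrow> (real \<Rightarrow> real) \<Rightarrow> bool" where
  "H1_with_deriv p q phi g \<longleftrightarrow>
     g \<in> borel_measurable lborel \<and>
     set_integrable lborel {p..q} (\<lambda>r. (g r)^2) \<and>
     (\<forall>x\<in>{p..q}. phi x = phi p + (LINT t:{p..x}|lborel. g t))"

text \<open>Principal eigenvalue via the weighted Rayleigh quotient with weight w
  (Neumann: test functions in H^1; the minimum is the infimum).\<close>
definition eig_N :: "(real \<Rightarrow> real) \<Rightarrow> (real \<Rightarrow> real) \<Rightarrow> real \<Rightarrow> real \<Rightarrow> real" where
  "eig_N w c p q = Inf {(LINT r:{p..q}|lborel. w r * ((g r)^2 + c r * (phi r)^2)) | phi g.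
      H1_with_deriv p q phi g \<and> (LINT r:{p..q}|lborel. w r * (phi r)^2) = 1}"

definition eig_D :: "(real \<Rightarrow> real) \<Rightarrow> (real \<Rightarrow> real) \<Rightarrow> real \<Rightarrow> real \<Rightarrow> real" where
  "eig_D w c p q = Inf {(LINT r:{p..q}|lborel. w r * ((g r)^2 + c r * (phi r)^2)) | phi g.
      H1_with_deriv p q phi g \<and> phi p = 0 \<and> phi q = 0 \<and>
      (LINT r:{p..q}|lborel. w r * (phi r)^2) = 1}"

definition lam :: "nat \<Rightarrow> (real \<Rightarrow> real) \<Rightarrow> (real \<Rightarrow> real) \<Rightarrow> real \<Rightarrow> real" where
  "lam d m c s = eig_N (\<lambda>r. r ^ (d - 1) * exp (2 * s * m r)) c 0 1"

definition lamN :: "nat \<Rightarrow> (real \<Rightarrow> real) \<Rightarrow> real \<Rightarrow> real \<Rightarrow> real" where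
  "lamN d c a b = eig_N (\<lambda>r. r ^ (d - 1)) c a b"

definition lamD :: "nat \<Rightarrow> (real \<Rightarrow> real) \<Rightarrow> real \<Rightarrow> real \<Rightarrow> real" where
  "lamD d c a b = eig_D (\<lambda>r. r ^ (d - 1)) c a b"

definition finitely_many_sign_changes :: "(real \<Rightarrow> real) \<Rightarrow> real set \<Rightarrow> bool" where
  "finitely_many_sign_changes f A \<longleftrightarrow>
     (\<exists>F. finite F \<and> (\<forall>x\<in>A. \<forall>y\<in>A. x < y \<and> {x..y} \<inter> F = {} \<longrightarrow>
        \<not> (\<exists>u\<in>{x..y}. \<exists>v\<in>{x..y}. f u > 0 \<and> f v < 0)))"

text \<open>Breakpoints Y_n and X_n of the step function bar m.\<close>
definition Ypt :: "real \<Rightarrow> real \<Rightarrow> real \<Rightarrow> nat \<Rightarrow> nat \<Rightarrow> real" where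
  "Ypt \<delta> \<alpha> \<beta> l n = \<delta> + (\<Sum>i=1..n. \<alpha> ^ (i + l) + \<beta> ^ (i + l))"

definition Xpt :: "real \<Rightarrow> real \<Rightarrow> real \<Rightarrow> nat \<Rightarrow> nat \<Rightarrow> real" where
  "Xpt \<delta> \<alpha> \<beta> l n = Ypt \<delta> \<alpha> \<beta> l n - \<beta> ^ (n + l)"

text \<open>m is below the step function bar m on [delta,a] (and, by symmetry bar m(r) = bar m(1-r),
  on [b,1-delta]).\<close>
definition below_step :: "(real \<Rightarrow> real) \<Rightarrow> real \<Rightarrow> real \<Rightarrow> real \<Rightarrow> real \<Rightarrow> real \<Rightarrow> nat \<Rightarrow> bool" where
  "below_step m \<delta> h \<alpha> \<beta> \<nu> l \<longleftrightarrow>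
     (\<forall>n\<ge>1.
        (\<forall>r\<in>{Ypt \<delta> \<alpha> \<beta> l (n - 1) .. Xpt \<delta> \<alpha> \<beta> l n}. m r \<le> h ^ n \<and> m (1 - r) \<le> h ^ n) \<and>
        (\<forall>r\<in>{Xpt \<delta> \<alpha> \<beta> l n .. Ypt \<delta> \<alpha> \<beta> l n}. m r \<le> - \<nu> * h ^ n \<and> m (1 - r) \<le> - \<nu> * h ^ n))"

definition S_N :: "real \<Rightarrow> (real \<Rightarrow> real) \<Rightarrow> (real \<Rightarrow> real) \<Rightarrow> bool" where
  "S_N a m m' \<longleftrightarrow>
     (\<exists>\<delta> h \<alpha> \<beta> \<nu> (l::nat).
        0 < \<delta> \<and> \<delta> < a \<and> 0 < h \<and> h < \<alpha> \<and> \<alpha> < \<beta> \<and> \<beta> < 1 \<and> 1 < \<nu> \<and>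
        (\<lambda>i. \<alpha> ^ (Suc i + l) + \<beta> ^ (Suc i + l)) sums (a - \<delta>) \<and>
        finitely_many_sign_changes m' ({0..<\<delta>} \<union> {1 - \<delta><..1}) \<and>
        below_step m \<delta> h \<alpha> \<beta> \<nu> l)"

end

theory Submission
  imports Defs
begin

lemma set_integrable_mult_cont:
  fixes f h :: "real \<Rightarrow> real"
  assumes f: "set_integrable lborel {p..q} f" and h: "continuous_on {p..q} h"
  shows "set_integrable lborel {p..q} (\<lambda>x. h x * f x)"
proof -
  obtain B where B: "\<And>x. x\<in>{p..q} \<Longrightarrow> norm (h x) \<le> B"
    using compact_imp_bounded[OF compact_continuous_image[OF h compact_Icc]] unfolding bounded_iff by (metis image_eqI)
  have m1: "(\<lambda>x. indicator {p..q} x *\<^sub>R h x) \<in> borel_measurable lborel"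
    using borel_measurable_continuous_on_indicator[OF _ h] by simp
  have m2: "(\<lambda>x. indicator {p..q} x *\<^sub>R f x) \<in> borel_measurable lborel"
    using f unfolding set_integrable_def by auto
  have "(\<lambda>x. (indicator {p..q} x *\<^sub>R h x) * (indicator {p..q} x *\<^sub>R f x)) \<in> borel_measurable lborel"
    using m1 m2 by (rule borel_measurable_times)
  also have "(\<lambda>x. (indicator {p..q} x *\<^sub>R h x) * (indicator {p..q} x *\<^sub>R f x)) = (\<lambda>x. indicator {p..q} x *\<^sub>R (h x * f x))"
    by (auto simp: indicator_def)
  finally have meas: "(\<lambda>x. indicator {p..q} x *\<^sub>R (h x * f x)) \<in> borel_measurable lborel" .
  have int2: "integrable lborel (\<lambda>x. B *\<^sub>R (indicator {p..q} x *\<^sub>R f x))"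
    using f unfolding set_integrable_def by auto
  show ?thesis unfolding set_integrable_def
  proof (rule Bochner_Integration.integrable_bound[OF int2 meas])
    show "AE x in lborel. norm (indicator {p..q} x *\<^sub>R (h x * f x)) \<le> norm (B *\<^sub>R (indicator {p..q} x *\<^sub>R f x))"
    proof (rule AE_I2)
      fix x show "norm (indicator {p..q} x *\<^sub>R (h x * f x)) \<le> norm (B *\<^sub>R (indicator {p..q} x *\<^sub>R f x))"
      proof (cases "x \<in> {p..q}")
        case True
        then have "\<bar>h x\<bar> \<le> B" using B by auto
        then have "\<bar>h x\<bar> * \<bar>f x\<bar> \<le> \<bar>B\<bar> * \<bar>f x\<bar>" by (intro mult_right_mono) auto
        then show ?thesis using True by (simp add: abs_mult)
      qed simp
    qed
  qed
qed

lemma set_integral_pos_cont: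
  fixes f :: "real \<Rightarrow> real"
  assumes "p < q" "continuous_on {p..q} f" "\<And>x. x\<in>{p..q} \<Longrightarrow> 0 \<le> f x" "x0 \<in> {p..q}" "f x0 > 0"
  shows "(LINT x:{p..q}|lborel. f x) > 0"
proof -
  have si: "set_integrable lborel {p..q} f" by (rule borel_integrable_atLeastAtMost'[OF assms(2)])
  have ge: "(LINT x:{p..q}|lborel. f x) \<ge> 0"
    unfolding set_lebesgue_integral_def using assms(3) by (intro Bochner_Integration.integral_nonneg) (auto simp: indicator_def)
  show ?thesis
  proof (rule ccontr)
    assume "\<not> ?thesis"
    then have z: "(LINT x:{p..q}|lborel. f x) = 0" using ge by simp
    have "(f has_integral 0) {p..q}"
      using set_borel_integral_eq_integral[OF si] z by (metis integrable_integral)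
    then have "f x0 = 0"
      using has_integral_0_cbox_imp_0[of p q f x0] assms by auto
    then show False using assms by simp
  qed
qed

lemma H1_scale:
  assumes "H1_with_deriv p q phi g"
  shows "H1_with_deriv p q (\<lambda>x. k * phi x) (\<lambda>x. k * g x)"
proof -
  have m: "g \<in> borel_measurable lborel" and si: "set_integrable lborel {p..q} (\<lambda>r. (g r)^2)"
    and eq: "\<forall>x\<in>{p..q}. phi x = phi p + (LINT t:{p..x}|lborel. g t)"
    using assms unfolding H1_with_deriv_def by blast+
  have "set_integrable lborel {p..q} (\<lambda>r. k^2 * (g r)^2)" using si by auto
  then have "set_integrable lborel {p..q} (\<lambda>r. (k * g r)^2)" by (simp add: power_mult_distrib)
  moreover have "(\<lambda>x. k * g x) \<in> borel_measurable lborel" using m by measurable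
  moreover have "\<forall>x\<in>{p..q}. k * phi x = k * phi p + (LINT t:{p..x}|lborel. k * g t)"
  proof
    fix x assume "x \<in> {p..q}"
    then have "phi x = phi p + (LINT t:{p..x}|lborel. g t)" using eq by blast
    then show "k * phi x = k * phi p + (LINT t:{p..x}|lborel. k * g t)"
      by (simp only: set_integral_mult_right distrib_left)
  qed
  ultimately show ?thesis unfolding H1_with_deriv_def by blast
qed

lemma sq_int_imp_int:
  fixes g :: "real \<Rightarrow> real"
  assumes m: "g \<in> borel_measurable lborel" and si: "set_integrable lborel {p..q} (\<lambda>r. (g r)^2)"
  shows "set_integrable lborel {p..q} g"
proof -
  have c1: "set_integrable lborel {p..q} (\<lambda>r. 1::real)"
    by (rule borel_integrable_atLeastAtMost') simp
  have "set_integrable lborel {p..q} (\<lambda>r. 1 + (g r)^2)" using c1 si by auto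
  then have int2: "integrable lborel (\<lambda>x. indicator {p..q} x *\<^sub>R (1 + (g x)^2))"
    unfolding set_integrable_def .
  show ?thesis unfolding set_integrable_def
  proof (rule Bochner_Integration.integrable_bound[OF int2])
    show "(\<lambda>x. indicator {p..q} x *\<^sub>R g x) \<in> borel_measurable lborel" using m by measurable
    show "AE x in lborel. norm (indicator {p..q} x *\<^sub>R g x) \<le> norm (indicator {p..q} x *\<^sub>R (1 + (g x)^2))"
    proof (rule AE_I2)
      fix x
      have "\<bar>g x\<bar> \<le> 1 + (g x)^2"
      proof (cases "\<bar>g x\<bar> \<le> 1")
        case True then show ?thesis by (smt (verit) zero_le_power2)
      next
        case False then have "\<bar>g x\<bar> \<le> \<bar>g x\<bar> * \<bar>g x\<bar>" by (intro mult_le_cancel_left1[THEN iffD2]) auto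
        then show ?thesis by (simp add: power2_eq_square abs_mult_self_eq)
      qed
      then show "norm (indicator {p..q} x *\<^sub>R g x) \<le> norm (indicator {p..q} x *\<^sub>R (1 + (g x)^2))"
        by (auto simp: indicator_def)
    qed
  qed
qed

lemma split_Icc_integral:
  fixes g :: "real \<Rightarrow> real"
  assumes si: "set_integrable lborel {p..q} g" and "p \<le> a" "a \<le> x" "x \<le> q"
  shows "(LINT t:{p..x}|lborel. g t) = (LINT t:{p..a}|lborel. g t) + (LINT t:{a..x}|lborel. g t)"
proof -
  have i1: "set_integrable lborel {p..<a} g" by (rule set_integrable_subset[OF si]) (use assms in auto)
  have i2: "set_integrable lborel {a..x} g" by (rule set_integrable_subset[OF si]) (use assms in auto)
  have i3: "set_integrable lborel {p..a} g" by (rule set_integrable_subset[OF si]) (use assms in auto)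
  have "{p..x} = {p..<a} \<union> {a..x}" using assms by auto
  then have "(LINT t:{p..x}|lborel. g t) = (LINT t:{p..<a}|lborel. g t) + (LINT t:{a..x}|lborel. g t)"
    using set_integral_Un[OF _ i1 i2] by (metis atLeastLessThan_iff atLeastAtMost_iff disjoint_iff not_le)
  moreover have "(LINT t:{p..a}|lborel. g t) = (LINT t:{p..<a}|lborel. g t)"
  proof (rule set_integral_cong_set)
    show "set_borel_measurable lborel {p..<a} g" using i1 unfolding set_integrable_def set_borel_measurable_def by (rule borel_measurable_integrable)
    show "set_borel_measurable lborel {p..a} g" using i3 unfolding set_integrable_def set_borel_measurable_def by (rule borel_measurable_integrable)
    show "AE x in lborel. (x \<in> {p..<a}) = (x \<in> {p..a})"
      using AE_lborel_singleton[of a] by eventually_elim auto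
  qed
  ultimately show ?thesis by simp
qed

lemma H1_restrict:
  assumes "H1_with_deriv p q phi g" "p \<le> a" "a \<le> b" "b \<le> q"
  shows "H1_with_deriv a b phi g"
proof -
  have m: "g \<in> borel_measurable lborel" and si: "set_integrable lborel {p..q} (\<lambda>r. (g r)^2)"
    and eq: "\<forall>x\<in>{p..q}. phi x = phi p + (LINT t:{p..x}|lborel. g t)"
    using assms unfolding H1_with_deriv_def by blast+
  have gi: "set_integrable lborel {p..q} g" by (rule sq_int_imp_int[OF m si])
  have "set_integrable lborel {a..b} (\<lambda>r. (g r)^2)" by (rule set_integrable_subset[OF si]) (use assms in auto)
  moreover have "\<forall>x\<in>{a..b}. phi x = phi a + (LINT t:{a..x}|lborel. g t)"
  proof
    fix x assume x: "x \<in> {a..b}"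
    have "phi x = phi p + (LINT t:{p..x}|lborel. g t)" using eq x assms by (meson atLeastAtMost_iff order_trans)
    also have "\<dots> = phi p + (LINT t:{p..a}|lborel. g t) + (LINT t:{a..x}|lborel. g t)"
      using split_Icc_integral[OF gi, of a x] x assms by auto
    also have "phi p + (LINT t:{p..a}|lborel. g t) = phi a" using eq assms by (metis atLeastAtMost_iff order_trans)
    finally show "phi x = phi a + (LINT t:{a..x}|lborel. g t)" .
  qed
  ultimately show ?thesis using m unfolding H1_with_deriv_def by blast
qed

lemma H1_tent:
  assumes "a \<le> b"
  shows "H1_with_deriv a b (\<lambda>r. (r - a) * (b - r)) (\<lambda>r. a + b - 2 * r)"
proof -
  have "set_integrable lborel {a..b} (\<lambda>r. (a + b - 2 * r)^2)"
    by (rule borel_integrable_atLeastAtMost') (intro continuous_intros)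
  moreover have "(\<lambda>r. a + b - 2 * r) \<in> borel_measurable lborel" by measurable
  moreover have "\<forall>x\<in>{a..b}. (x - a) * (b - x) = (a - a) * (b - a) + (LINT t:{a..x}|lborel. a + b - 2 * t)"
  proof
    fix x assume x: "x \<in> {a..b}"
    have "(LINT t:{a..x}|lborel. a + b - 2 * t) = (\<lambda>t. (t - a) * (b - t)) x - (\<lambda>t. (t - a) * (b - t)) a"
      unfolding set_lebesgue_integral_def
    proof (rule integral_FTC_atLeastAtMost)
      show "a \<le> x" using x by auto
      show "continuous_on {a..x} (\<lambda>t. a + b - 2 * t)" by (intro continuous_intros)
      fix y
      show "((\<lambda>t. (t - a) * (b - t)) has_vector_derivative a + b - 2 * y) (at y within {a..x})"
        unfolding has_real_derivative_iff_has_vector_derivative[symmetric]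
        by (auto intro!: derivative_eq_intros simp: algebra_simps)
    qed
    then show "(x - a) * (b - x) = (a - a) * (b - a) + (LINT t:{a..x}|lborel. a + b - 2 * t)" by simp
  qed
  ultimately show ?thesis unfolding H1_with_deriv_def by blast
qed

lemma normalize:
  fixes w c phi g :: "real \<Rightarrow> real"
  assumes H: "H1_with_deriv p q phi g" and I: "(LINT r:{p..q}|lborel. w r * (phi r)^2) > 0"
  defines "k \<equiv> 1 / sqrt (LINT r:{p..q}|lborel. w r * (phi r)^2)"
  shows "H1_with_deriv p q (\<lambda>x. k * phi x) (\<lambda>x. k * g x)"
    "(LINT r:{p..q}|lborel. w r * (k * phi r)^2) = 1"
    "(LINT r:{p..q}|lborel. w r * ((k * g r)^2 + c r * (k * phi r)^2))
       = (LINT r:{p..q}|lborel. w r * ((g r)^2 + c r * (phi r)^2)) / (LINT r:{p..q}|lborel. w r * (phi r)^2)"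
proof -
  let ?I = "LINT r:{p..q}|lborel. w r * (phi r)^2"
  have k2: "k^2 = 1 / ?I" unfolding k_def using I by (simp add: power_divide)
  show "H1_with_deriv p q (\<lambda>x. k * phi x) (\<lambda>x. k * g x)" by (rule H1_scale[OF H])
  have "(\<lambda>r. w r * (k * phi r)^2) = (\<lambda>r. k^2 * (w r * (phi r)^2))" by (auto simp: fun_eq_iff power_mult_distrib)
  then show "(LINT r:{p..q}|lborel. w r * (k * phi r)^2) = 1" using k2 I by simp
  have "(\<lambda>r. w r * ((k * g r)^2 + c r * (k * phi r)^2)) = (\<lambda>r. k^2 * (w r * ((g r)^2 + c r * (phi r)^2)))"
    by (auto simp: fun_eq_iff power_mult_distrib algebra_simps)
  then show "(LINT r:{p..q}|lborel. w r * ((k * g r)^2 + c r * (k * phi r)^2))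
       = (LINT r:{p..q}|lborel. w r * ((g r)^2 + c r * (phi r)^2)) / ?I" using k2 by simp
qed

lemma N_bdd:
  fixes c :: "real \<Rightarrow> real"
  assumes "0 \<le> a" "\<And>r. r \<in> {a..b} \<Longrightarrow> c r > 0"
  shows "bdd_below {(LINT r:{a..b}|lborel. r ^ (d - 1) * ((g r)^2 + c r * (phi r)^2)) | phi g.
      H1_with_deriv a b phi g \<and> (LINT r:{a..b}|lborel. r ^ (d - 1) * (phi r)^2) = 1}"
proof (rule bdd_belowI[of _ 0])
  fix x assume "x \<in> {(LINT r:{a..b}|lborel. r ^ (d - 1) * ((g r)^2 + c r * (phi r)^2)) | phi g.
      H1_with_deriv a b phi g \<and> (LINT r:{a..b}|lborel. r ^ (d - 1) * (phi r)^2) = 1}"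
  then obtain phi g where x: "x = (LINT r:{a..b}|lborel. r ^ (d - 1) * ((g r)^2 + c r * (phi r)^2))" by blast
  have "\<And>r. 0 \<le> indicator {a..b} r *\<^sub>R (r ^ (d - 1) * ((g r)^2 + c r * (phi r)^2))"
  proof -
    fix r show "0 \<le> indicator {a..b} r *\<^sub>R (r ^ (d - 1) * ((g r)^2 + c r * (phi r)^2))"
    proof (cases "r \<in> {a..b}")
      case True
      then have "c r > 0" "r \<ge> 0" using assms by auto
      then show ?thesis using True by (auto intro!: mult_nonneg_nonneg add_nonneg_nonneg)
    qed simp
  qed
  then show "0 \<le> x" unfolding x set_lebesgue_integral_def by (rule Bochner_Integration.integral_nonneg)
qed

lemma lamN_le_lamD:
  fixes c :: "real \<Rightarrow> real"
  assumes "0 < a" "a < b" "\<And>r. r \<in> {a..b} \<Longrightarrow> c r > 0"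
  shows "lamN d c a b \<le> lamD d c a b"
proof -
  define phi0 where "phi0 = (\<lambda>r::real. (r - a) * (b - r))"
  define g0 where "g0 = (\<lambda>r::real. a + b - 2 * r)"
  have H: "H1_with_deriv a b phi0 g0" unfolding phi0_def g0_def by (rule H1_tent) (use assms in auto)
  have I: "(LINT r:{a..b}|lborel. r ^ (d - 1) * (phi0 r)^2) > 0"
  proof (rule set_integral_pos_cont[of a b _ "(a+b)/2"])
    show "continuous_on {a..b} (\<lambda>r. r ^ (d - 1) * (phi0 r)^2)" unfolding phi0_def by (intro continuous_intros)
    show "\<And>x. x \<in> {a..b} \<Longrightarrow> 0 \<le> x ^ (d - 1) * (phi0 x)^2" using assms by auto
    show "0 < ((a + b) / 2) ^ (d - 1) * (phi0 ((a + b) / 2))^2" using assms unfolding phi0_def by auto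
  qed (use assms in auto)
  define k where "k = 1 / sqrt (LINT r:{a..b}|lborel. r ^ (d - 1) * (phi0 r)^2)"
  note nz = normalize[OF H I, folded k_def]
  have "(LINT r:{a..b}|lborel. r ^ (d - 1) * ((k * g0 r)^2 + c r * (k * phi0 r)^2)) \<in>
     {(LINT r:{a..b}|lborel. r ^ (d - 1) * ((g r)^2 + c r * (phi r)^2)) | phi g.
      H1_with_deriv a b phi g \<and> phi a = 0 \<and> phi b = 0 \<and> (LINT r:{a..b}|lborel. r ^ (d - 1) * (phi r)^2) = 1}"
    using nz(1,2) unfolding phi0_def by force
  then have ne: "{(LINT r:{a..b}|lborel. r ^ (d - 1) * ((g r)^2 + c r * (phi r)^2)) | phi g.
      H1_with_deriv a b phi g \<and> phi a = 0 \<and> phi b = 0 \<and> (LINT r:{a..b}|lborel. r ^ (d - 1) * (phi r)^2) = 1} \<noteq> {}"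
    by blast
  show ?thesis unfolding lamN_def lamD_def eig_N_def eig_D_def
    by (rule cInf_superset_mono[OF ne N_bdd]) (use assms in auto)
qed

lemma main_bound:
  fixes w c phi g :: "real \<Rightarrow> real"
  assumes ab: "0 < a" "a < b" "b < 1"
    and wcont: "continuous_on {0..1} w" and wnn: "\<And>r. r \<in> {0..1} \<Longrightarrow> 0 \<le> w r"
    and weq: "\<And>r. r \<in> {a..b} \<Longrightarrow> w r = r ^ (d - 1)"
    and ccont: "continuous_on {0..1} c" and cpos: "\<And>r. r \<in> {0..1} \<Longrightarrow> c r > 0"
    and cL: "\<And>r. r \<in> {0..1} - {a..b} \<Longrightarrow> c r \<ge> lamN d c a b"
    and H: "H1_with_deriv 0 1 phi g" and norm1: "(LINT r:{0..1}|lborel. w r * (phi r)^2) = 1"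
  shows "lamN d c a b \<le> (LINT r:{0..1}|lborel. w r * ((g r)^2 + c r * (phi r)^2))"
proof -
  define L where "L = lamN d c a b"
  define S where "S = {0..1::real}"
  define A where "A = {a..b}"
  define Out where "Out = S - A"
  have SAO: "S = A \<union> Out" "A \<inter> Out = {}" using ab unfolding S_def A_def Out_def by auto
  have Asets: "A \<in> sets lborel" "Out \<in> sets lborel" unfolding A_def Out_def S_def by auto
  have AS: "A \<subseteq> S" "Out \<subseteq> S" unfolding A_def Out_def S_def using ab by auto
  have F1: "set_integrable lborel S (\<lambda>r. w r * (phi r)^2)"
    using norm1 not_integrable_integral_eq unfolding S_def set_integrable_def set_lebesgue_integral_def by force
  have gsq: "set_integrable lborel S (\<lambda>r. (g r)^2)" using H unfolding H1_with_deriv_def S_def by blast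
  have F2: "set_integrable lborel S (\<lambda>r. w r * (g r)^2)"
    using set_integrable_mult_cont[OF gsq[unfolded S_def] wcont] unfolding S_def .
  have F3: "set_integrable lborel S (\<lambda>r. c r * (w r * (phi r)^2))"
    using set_integrable_mult_cont[OF F1[unfolded S_def] ccont] unfolding S_def .
  have Teq: "(\<lambda>r. w r * ((g r)^2 + c r * (phi r)^2)) = (\<lambda>r. w r * (g r)^2 + c r * (w r * (phi r)^2))"
    by (auto simp: fun_eq_iff algebra_simps)
  have FT: "set_integrable lborel S (\<lambda>r. w r * ((g r)^2 + c r * (phi r)^2))"
    unfolding Teq using F2 F3 by auto
  have splitT: "(LINT r:S|lborel. w r * ((g r)^2 + c r * (phi r)^2)) =
     (LINT r:A|lborel. w r * ((g r)^2 + c r * (phi r)^2)) + (LINT r:Out|lborel. w r * ((g r)^2 + c r * (phi r)^2))"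
    unfolding SAO(1) by (rule set_integral_Un[OF SAO(2)]; rule set_integrable_subset[OF FT[unfolded SAO(1)]]) (use Asets in auto)
  have split1: "(LINT r:S|lborel. w r * (phi r)^2) =
     (LINT r:A|lborel. w r * (phi r)^2) + (LINT r:Out|lborel. w r * (phi r)^2)"
    unfolding SAO(1) by (rule set_integral_Un[OF SAO(2)]; rule set_integrable_subset[OF F1[unfolded SAO(1)]]) (use Asets in auto)
  define I where "I = (LINT r:A|lborel. r ^ (d - 1) * (phi r)^2)"
  define J where "J = (LINT r:Out|lborel. w r * (phi r)^2)"
  have IA: "(LINT r:A|lborel. w r * (phi r)^2) = I"
    unfolding I_def by (rule set_lebesgue_integral_cong) (auto simp: weq A_def)
  have QA: "(LINT r:A|lborel. w r * ((g r)^2 + c r * (phi r)^2)) = (LINT r:A|lborel. r ^ (d - 1) * ((g r)^2 + c r * (phi r)^2))"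
    by (rule set_lebesgue_integral_cong) (auto simp: weq A_def)
  have IJ: "I + J = 1" using split1 norm1 IA unfolding J_def S_def by simp
  have I0: "I \<ge> 0" unfolding I_def set_lebesgue_integral_def
    by (rule Bochner_Integration.integral_nonneg) (use ab in \<open>auto simp: indicator_def A_def\<close>)
  have Qnn: "(LINT r:A|lborel. r ^ (d - 1) * ((g r)^2 + c r * (phi r)^2)) \<ge> 0"
    unfolding set_lebesgue_integral_def
  proof (rule Bochner_Integration.integral_nonneg)
    fix r show "0 \<le> indicator A r *\<^sub>R (r ^ (d - 1) * ((g r)^2 + c r * (phi r)^2))"
    proof (cases "r \<in> A")
      case True
      then have "c r > 0" "r \<ge> 0" using cpos ab unfolding A_def by auto
      then show ?thesis using True by (auto intro!: mult_nonneg_nonneg add_nonneg_nonneg)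
    qed simp
  qed
  have inner: "(LINT r:A|lborel. r ^ (d - 1) * ((g r)^2 + c r * (phi r)^2)) \<ge> L * I"
  proof (cases "I = 0")
    case True then show ?thesis using Qnn by simp
  next
    case False
    then have Ipos: "I > 0" using I0 by simp
    have HA: "H1_with_deriv a b phi g" by (rule H1_restrict[OF H]) (use ab in auto)
    have Ipos': "(LINT r:{a..b}|lborel. r ^ (d - 1) * (phi r)^2) > 0" using Ipos unfolding I_def A_def .
    define k where "k = 1 / sqrt (LINT r:{a..b}|lborel. r ^ (d - 1) * (phi r)^2)"
    note nz = normalize[OF HA Ipos', folded k_def] normalize(3)[where c=c, OF HA Ipos', folded k_def]
    have mem: "(LINT r:{a..b}|lborel. r ^ (d - 1) * ((k * g r)^2 + c r * (k * phi r)^2)) \<in>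
     {(LINT r:{a..b}|lborel. r ^ (d - 1) * ((g r)^2 + c r * (phi r)^2)) | phi g.
      H1_with_deriv a b phi g \<and> (LINT r:{a..b}|lborel. r ^ (d - 1) * (phi r)^2) = 1}"
      using nz(1,2) by force
    have "L \<le> (LINT r:{a..b}|lborel. r ^ (d - 1) * ((k * g r)^2 + c r * (k * phi r)^2))"
      unfolding L_def lamN_def eig_N_def
      by (rule cInf_lower[OF mem N_bdd]) (use ab cpos in auto)
    then have "L \<le> (LINT r:A|lborel. r ^ (d - 1) * ((g r)^2 + c r * (phi r)^2)) / I"
      using nz(4) unfolding A_def I_def by simp
    then show ?thesis using Ipos by (simp add: field_simps)
  qed
  have outer: "(LINT r:Out|lborel. w r * ((g r)^2 + c r * (phi r)^2)) \<ge> L * J"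
  proof -
    have iO1: "set_integrable lborel Out (\<lambda>r. w r * (phi r)^2)" by (rule set_integrable_subset[OF F1 Asets(2) AS(2)])
    have iOT: "set_integrable lborel Out (\<lambda>r. w r * ((g r)^2 + c r * (phi r)^2))" by (rule set_integrable_subset[OF FT Asets(2) AS(2)])
    have "(LINT r:Out|lborel. L * (w r * (phi r)^2)) \<le> (LINT r:Out|lborel. w r * ((g r)^2 + c r * (phi r)^2))"
    proof (rule set_integral_mono)
      show "set_integrable lborel Out (\<lambda>r. L * (w r * (phi r)^2))" using iO1 by auto
      show "set_integrable lborel Out (\<lambda>r. w r * ((g r)^2 + c r * (phi r)^2))" by (rule iOT)
      fix r assume r: "r \<in> Out"
      then have r01: "r \<in> {0..1}" and "r \<in> {0..1} - {a..b}" unfolding Out_def S_def A_def by auto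
      then have cr: "c r \<ge> L" using cL unfolding L_def by auto
      have wr: "w r \<ge> 0" using wnn r01 by auto
      have "L * (w r * (phi r)^2) \<le> c r * (w r * (phi r)^2)" using cr wr by (intro mult_right_mono) auto
      also have "\<dots> \<le> w r * (g r)^2 + c r * (w r * (phi r)^2)" using wr by auto
      finally show "L * (w r * (phi r)^2) \<le> w r * ((g r)^2 + c r * (phi r)^2)" by (simp add: algebra_simps)
    qed
    then show ?thesis unfolding J_def by simp
  qed
  have "(LINT r:{0..1}|lborel. w r * ((g r)^2 + c r * (phi r)^2)) \<ge> L * I + L * J"
    using splitT QA inner outer unfolding S_def by linarith
  also have "L * I + L * J = L" using IJ by (simp add: distrib_left[symmetric])
  finally show ?thesis unfolding L_def by simp
qed

lemma H1_const: "p \<le> q \<Longrightarrow> H1_with_deriv p q (\<lambda>x. 1) (\<lambda>x. 0)"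
  unfolding H1_with_deriv_def
  by (auto intro!: borel_integrable_atLeastAtMost' continuous_intros)

theorem lemma3p7:
  fixes d :: nat and a b :: real and m m' c :: "real \<Rightarrow> real"
  assumes "d \<ge> 1"
    and "0 < a" "a < b" "b < 1" "a + b = 1"
    and "\<And>x. x \<in> {0..1} \<Longrightarrow> (m has_real_derivative m' x) (at x within {0..1})"
    and "continuous_on {0..1} m'"
    and "\<not> (\<exists>k. \<forall>x\<in>{0..1}. m x = k)"
    and "continuous_on {0..1} c"
    and "\<And>r. r \<in> {0..1} \<Longrightarrow> m r = m (1 - r)"
    and "\<And>r. r \<in> {a..b} \<Longrightarrow> m r = 0"
    and "\<And>r. r \<in> {0..1} \<Longrightarrow> c r > 0"
    and "\<And>r. r \<in> {0..a} \<union> {b..1} \<Longrightarrow> c r > lamD d c a b"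
    and "S_N a m m'"
  shows "Liminf at_top (\<lambda>s. ereal (lam d m c s)) \<ge> ereal (lamN d c a b)"
proof -
  have mcont: "continuous_on {0..1} m"
    unfolding continuous_on_eq_continuous_within
    using assms(6) DERIV_continuous by blast
  have ND: "lamN d c a b \<le> lamD d c a b"
    by (rule lamN_le_lamD) (use assms(2,3,4,12) in auto)
  have cL: "\<And>r. r \<in> {0..1} - {a..b} \<Longrightarrow> c r \<ge> lamN d c a b"
  proof -
    fix r assume "r \<in> {0..1} - {a..b}"
    then have "r \<in> {0..a} \<union> {b..1}" by auto
    then show "c r \<ge> lamN d c a b" using assms(13) ND by (meson less_imp_le order_trans)
  qed
  have bound: "lamN d c a b \<le> lam d m c s" for s
  proof -
    define w where "w = (\<lambda>r. r ^ (d - 1) * exp (2 * s * m r))"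
    have wcont: "continuous_on {0..1} w" unfolding w_def
      by (intro continuous_intros mcont)
    have wnn: "\<And>r. r \<in> {0..1} \<Longrightarrow> 0 \<le> w r" unfolding w_def by auto
    have weq: "\<And>r. r \<in> {a..b} \<Longrightarrow> w r = r ^ (d - 1)" unfolding w_def using assms(11) by simp
    have I: "(LINT r:{0..1}|lborel. w r * ((\<lambda>x. 1) r)^2) > 0"
    proof (rule set_integral_pos_cont[of 0 1 _ 1])
      show "continuous_on {0..1} (\<lambda>r. w r * ((\<lambda>x. 1) r)^2)" using wcont by simp
      show "(0::real) < 1" by simp
      show "\<And>x. x \<in> {0..1} \<Longrightarrow> 0 \<le> w x * ((\<lambda>x. 1) x)^2" using wnn by simp
      show "(1::real) \<in> {0..1}" by simp
      show "0 < w 1 * ((\<lambda>x. 1) 1)^2" unfolding w_def by simp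
    qed
    define k where "k = 1 / sqrt (LINT r:{0..1}|lborel. w r * ((\<lambda>x. 1) r)^2)"
    note nz = normalize[OF H1_const I, folded k_def]
    have mem: "(LINT r:{0..1}|lborel. w r * ((k * 0)^2 + c r * (k * 1)^2)) \<in>
      {(LINT r:{0..1}|lborel. w r * ((g r)^2 + c r * (phi r)^2)) | phi g.
      H1_with_deriv 0 1 phi g \<and> (LINT r:{0..1}|lborel. w r * (phi r)^2) = 1}"
      using nz(1,2) by force
    show ?thesis unfolding lam_def eig_N_def w_def[symmetric]
    proof (rule cInf_greatest)
      show "{(LINT r:{0..1}|lborel. w r * ((g r)^2 + c r * (phi r)^2)) | phi g.
      H1_with_deriv 0 1 phi g \<and> (LINT r:{0..1}|lborel. w r * (phi r)^2) = 1} \<noteq> {}" using mem by blast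
      fix x assume "x \<in> {(LINT r:{0..1}|lborel. w r * ((g r)^2 + c r * (phi r)^2)) | phi g.
      H1_with_deriv 0 1 phi g \<and> (LINT r:{0..1}|lborel. w r * (phi r)^2) = 1}"
      then obtain phi g where x: "x = (LINT r:{0..1}|lborel. w r * ((g r)^2 + c r * (phi r)^2))"
        and H: "H1_with_deriv 0 1 phi g" and n1: "(LINT r:{0..1}|lborel. w r * (phi r)^2) = 1" by blast
      show "lamN d c a b \<le> x" unfolding x
        by (rule main_bound[OF assms(2,3,4) wcont wnn weq assms(9) assms(12) cL H n1])
    qed
  qed
  show ?thesis
    by (rule Liminf_bounded) (use bound in auto)
qed

end
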